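(* Let $|\psi\rangle$ be a single-mode state of coherent rank $k$. Then for small real $\epsilon$, $$\hat a^\dagger|\psi\rangle=\frac1\epsilon(\mathbb I\otimes\langle0|)\,\hat B(2\epsilon,0)\,|\psi,1\rangle+O(\epsilon^2),$$ where the second mode is an auxiliary mode prepared in the Fock state $|1\rangle$ and projected onto the vacuum $|0\rangle$. Consequently $\hat a^\dagger$ can be implemented on $|\psi\rangle$ to arbitrary accuracy, the result having approximate coherent rank $2k$.
   Context: Two modes with annihilation operators $\hat a$ (system) and $\hat b$ (auxiliary); Fock states $|n\rangle$. The beamsplitter unitary is $\hat B(\theta,\phi)=e^{\frac\theta2(\hat a^\dagger\hat b e^{i\phi}-\hat a\hat b^\dagger e^{-i\phi})}$, so $\hat B(2\epsilon,0)=e^{\epsilon(\hat a^\dagger\hat b-\hat a\hat b^\dagger)}$. Coherent state $|\alpha\rangle=e^{-|\alpha|^2/2}\sum_n\frac{\alpha^n}{\sqrt{n!}}|n\rangle$. A state has coherent rank $k$ if it is a superposition of $k$ (product) coherent states; its approximate coherent rank is the smallest $k$ such that for every $\delta>0$ there is a coherent rank $k$ state with fidelity (after normalization) greater than $1-\delta$ to it. *)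

theory Defs
  imports Complex_Main
begin

(* Single-mode states: Fock-basis coefficient sequences nat => complex
  (component n = amplitude of |n>). Two-mode states: nat => nat => complex,
  first argument = system mode a, second = auxiliary mode b. *)

definition coherent :: "complex \<Rightarrow> nat \<Rightarrow> complex" where
  "coherent \<alpha> n = exp (- complex_of_real ((cmod \<alpha>)\<^sup>2 / 2)) * \<alpha> ^ n / complex_of_real (sqrt (fact n))"

definition fock :: "nat \<Rightarrow> nat \<Rightarrow> complex" where
  "fock j n = (if n = j then 1 else 0)"

definition adag :: "(nat \<Rightarrow> complex) \<Rightarrow> nat \<Rightarrow> complex" where
  "adag \<psi> n = (if n = 0 then 0 else complex_of_real (sqrt (real n)) * \<psi> (n - 1))"

definition tensor :: "(nat \<Rightarrow> complex) \<Rightarrow> (nat \<Rightarrow> complex) \<Rightarrow> nat \<Rightarrow> nat \<Rightarrow> complex" where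
  "tensor \<psi> \<chi> n m = \<psi> n * \<chi> m"

(* Beamsplitter generator (\<theta>/2)(a^dag b e^{i\<phi>} - a b^dag e^{-i\<phi>}), acting on Fock coefficients. *)
definition bs_gen :: "real \<Rightarrow> real \<Rightarrow> (nat \<Rightarrow> nat \<Rightarrow> complex) \<Rightarrow> nat \<Rightarrow> nat \<Rightarrow> complex" where
  "bs_gen \<theta> \<phi> v n m = complex_of_real (\<theta> / 2) *
     (cis \<phi> * (if n = 0 then 0 else complex_of_real (sqrt (real n) * sqrt (real (m + 1))) * v (n - 1) (m + 1))
      - cis (- \<phi>) * (if m = 0 then 0 else complex_of_real (sqrt (real (n + 1)) * sqrt (real m)) * v (n + 1) (m - 1)))"

(* B(\<theta>,\<phi>) = exp(generator), as the exponential series applied componentwise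
  (the generator preserves total photon number, so each component is a series in a
  finite-dimensional block). *)
definition beamsplitter :: "real \<Rightarrow> real \<Rightarrow> (nat \<Rightarrow> nat \<Rightarrow> complex) \<Rightarrow> nat \<Rightarrow> nat \<Rightarrow> complex" where
  "beamsplitter \<theta> \<phi> v n m = (\<Sum>k. ((bs_gen \<theta> \<phi> ^^ k) v) n m / of_nat (fact k))"

definition proj_aux_vac :: "(nat \<Rightarrow> nat \<Rightarrow> complex) \<Rightarrow> nat \<Rightarrow> complex" where
  "proj_aux_vac v n = v n 0"

definition has_coherent_rank :: "nat \<Rightarrow> (nat \<Rightarrow> complex) \<Rightarrow> bool" where
  "has_coherent_rank k \<psi> \<longleftrightarrow>
     (\<exists>c \<alpha> :: nat \<Rightarrow> complex. \<psi> = (\<lambda>n. \<Sum>j<k. c j * coherent (\<alpha> j) n))"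

definition inner_l2 :: "(nat \<Rightarrow> complex) \<Rightarrow> (nat \<Rightarrow> complex) \<Rightarrow> complex" where
  "inner_l2 \<phi> \<chi> = (\<Sum>n. cnj (\<phi> n) * \<chi> n)"

definition normsq_l2 :: "(nat \<Rightarrow> complex) \<Rightarrow> real" where
  "normsq_l2 \<phi> = (\<Sum>n. (cmod (\<phi> n))\<^sup>2)"

definition fidelity :: "(nat \<Rightarrow> complex) \<Rightarrow> (nat \<Rightarrow> complex) \<Rightarrow> real" where
  "fidelity \<phi> \<chi> = (cmod (inner_l2 \<phi> \<chi>))\<^sup>2 / (normsq_l2 \<phi> * normsq_l2 \<chi>)"

definition approx_coherent_rank :: "(nat \<Rightarrow> complex) \<Rightarrow> nat" where
  "approx_coherent_rank \<phi> =
     (LEAST k. \<forall>\<delta>>0. \<exists>\<chi>. has_coherent_rank k \<chi> \<and> fidelity \<phi> \<chi> > 1 - \<delta>)"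

end

theory Submission
  imports Defs "HOL-Analysis.Analysis"
begin

lemma sqrt_prod_le:
  fixes n m N :: nat assumes "n \<le> N" "m \<le> N"
  shows "sqrt (real n) * sqrt (real m) \<le> real N"
proof -
  have "sqrt (real n) * sqrt (real m) \<le> sqrt (real N) * sqrt (real N)"
    using assms by (intro mult_mono) auto
  also have "\<dots> = real N" by simp
  finally show ?thesis .
qed

lemma bs_gen_bound:
  assumes F: "\<And>n m. cmod (w n m) \<le> F (n+m)"
  shows "cmod (bs_gen (2*e) 0 w n m) \<le> 2*\<bar>e\<bar>*(real(n+m)+1) * F (n+m)"
proof -
  define X where "X = (if n = 0 then 0 else complex_of_real (sqrt (real n) * sqrt (real (m + 1))) * w (n - 1) (m + 1))"
  define Y where "Y = (if m = 0 then 0 else complex_of_real (sqrt (real (n + 1)) * sqrt (real m)) * w (n + 1) (m - 1))"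
  have F0: "0 \<le> F (n+m)" using F[of n m] norm_ge_zero order_trans by blast
  have eq: "bs_gen (2*e) 0 w n m = complex_of_real e * (X - Y)"
    unfolding bs_gen_def X_def Y_def by simp
  have X: "cmod X \<le> (real(n+m)+1) * F (n+m)"
  proof (cases "n = 0")
    case True then show ?thesis using F0 by (simp add: X_def)
  next
    case False
    have "cmod X = sqrt (real n) * sqrt (real (m + 1)) * cmod (w (n - 1) (m + 1))"
      using False by (simp add: X_def norm_mult)
    also have "\<dots> \<le> real (n+m+1) * F (n+m)"
    proof (rule mult_mono)
      show "sqrt (real n) * sqrt (real (m + 1)) \<le> real (n+m+1)" by (rule sqrt_prod_le) auto
      show "cmod (w (n - 1) (m + 1)) \<le> F (n+m)" using F[of "n-1" "m+1"] False by simp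
    qed (auto simp: F0)
    finally show ?thesis by (simp add: algebra_simps)
  qed
  have Y: "cmod Y \<le> (real(n+m)+1) * F (n+m)"
  proof (cases "m = 0")
    case True then show ?thesis using F0 by (simp add: Y_def)
  next
    case False
    have "cmod Y = sqrt (real (n+1)) * sqrt (real m) * cmod (w (n + 1) (m - 1))"
      using False by (simp add: Y_def norm_mult)
    also have "\<dots> \<le> real (n+m+1) * F (n+m)"
    proof (rule mult_mono)
      show "sqrt (real (n+1)) * sqrt (real m) \<le> real (n+m+1)" by (rule sqrt_prod_le) auto
      show "cmod (w (n + 1) (m - 1)) \<le> F (n+m)" using F[of "n+1" "m-1"] False by simp
    qed (auto simp: F0)
    finally show ?thesis by (simp add: algebra_simps)
  qed
  have "cmod (bs_gen (2*e) 0 w n m) = \<bar>e\<bar> * cmod (X - Y)" by (simp add: eq norm_mult)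
  also have "\<dots> \<le> \<bar>e\<bar> * (cmod X + cmod Y)" by (intro mult_left_mono norm_triangle_ineq4) auto
  also have "\<dots> \<le> \<bar>e\<bar> * (2 * ((real(n+m)+1) * F (n+m)))" using X Y by (intro mult_left_mono) auto
  finally show ?thesis by (simp add: algebra_simps)
qed

lemma iter_bound:
  assumes B: "\<And>n m. cmod (w n m) \<le> B (n+m)"
  shows "cmod ((bs_gen (2*e) 0 ^^ k) w n m) \<le> (2*\<bar>e\<bar>*(real(n+m)+1))^k * B (n+m)"
proof (induction k arbitrary: n m)
  case 0 then show ?case using B by simp
next
  case (Suc k)
  have "cmod ((bs_gen (2*e) 0 ^^ Suc k) w n m) = cmod (bs_gen (2*e) 0 ((bs_gen (2*e) 0 ^^ k) w) n m)" by simp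
  also have "\<dots> \<le> 2*\<bar>e\<bar>*(real(n+m)+1) * ((2*\<bar>e\<bar>*(real(n+m)+1))^k * B (n+m))"
    by (rule bs_gen_bound[where F = "\<lambda>N. (2*\<bar>e\<bar>*(real N+1))^k * B N"]) (use Suc in auto)
  finally show ?case by simp
qed

lemma H0: "tensor \<psi> (fock 1) n 0 = 0" by (simp add: tensor_def fock_def)
lemma H1: "bs_gen (2*e) 0 (tensor \<psi> (fock 1)) n 0 = complex_of_real e * adag \<psi> n"
  by (simp add: bs_gen_def tensor_def fock_def adag_def)
lemma H2: "bs_gen (2*e) 0 (bs_gen (2*e) 0 (tensor \<psi> (fock 1))) n 0 = 0"
  by (simp add: bs_gen_def tensor_def fock_def)

lemma vbound: "cmod (tensor \<psi> (fock 1) n m) \<le> cmod (\<psi> (n + m - 1))"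
  by (simp add: tensor_def fock_def norm_mult)

lemma exp_sums_real: "(\<lambda>i. x^i / fact i) sums exp (x::real)"
  using exp_converges[of x] by (simp add: divide_inverse mult.commute scaleR_conv_of_real)

lemma d_bound:
  assumes e0: "e \<noteq> 0" and e1: "\<bar>e\<bar> < 1"
  shows "cmod (adag \<psi> n - proj_aux_vac (beamsplitter (2*e) 0 (tensor \<psi> (fock 1))) n / complex_of_real e)
         \<le> e^2 * (8*(real n+1)^3*exp(2*(real n+1))*cmod(\<psi>(n-1)))"
proof -
  define v where "v = tensor \<psi> (fock 1)"
  define H where "H = bs_gen (2*e) 0"
  define a where "a = (\<lambda>i. (H ^^ i) v n 0 / of_nat (fact i))"
  define x where "x = 2*\<bar>e\<bar>*(real n+1)"
  define B where "B = cmod (\<psi> (n - 1))"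
  have x0: "0 \<le> x" by (simp add: x_def)
  have B0: "0 \<le> B" by (simp add: B_def)
  have abound: "norm (a i) \<le> x^i / fact i * B" for i
  proof -
    have "cmod ((H ^^ i) v n 0) \<le> x^i * B"
      using iter_bound[where w=v and B="\<lambda>N. cmod (\<psi> (N - 1))" and e=e and k=i and n=n and m=0] vbound
      by (simp add: H_def v_def x_def B_def)
    then show ?thesis by (simp add: a_def norm_divide field_simps)
  qed
  have sg: "summable (\<lambda>i. x^i / fact i * B)"
    using exp_sums_real[of x] by (intro summable_mult2) (simp add: sums_summable)
  have sa: "summable a"
    by (rule summable_comparison_test'[OF sg abound])
  have a0: "a 0 = 0" by (simp add: a_def v_def tensor_def fock_def)
  have a1: "a 1 = complex_of_real e * adag \<psi> n" using H1[of e \<psi> n] by (simp add: a_def v_def H_def)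
  have a2: "a 2 = 0" using H2[of e \<psi> n] by (simp add: a_def v_def H_def numeral_2_eq_2)
  have bs: "proj_aux_vac (beamsplitter (2*e) 0 (tensor \<psi> (fock 1))) n = suminf a"
    by (simp add: proj_aux_vac_def beamsplitter_def a_def H_def v_def)
  define S where "S = (\<Sum>i. a (i + 3))"
  have "suminf a = S + (\<Sum>i<3. a i)"
    unfolding S_def by (rule suminf_split_initial_segment[OF sa])
  also have "(\<Sum>i<3. a i) = complex_of_real e * adag \<psi> n"
    using a0 a1 a2 by (simp add: numeral_3_eq_3 numeral_2_eq_2)
  finally have sumeq: "suminf a = S + complex_of_real e * adag \<psi> n" .
  have dEq: "adag \<psi> n - suminf a / complex_of_real e = - S / complex_of_real e"
    using e0 by (simp add: sumeq field_simps)
  have tb: "norm (a (i+3)) \<le> x^3 * B * (x^i / fact i)" for i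
  proof -
    have "norm (a (i+3)) \<le> x^(i+3) / fact (i+3) * B" by (rule abound)
    also have "\<dots> \<le> x^(i+3) / fact i * B"
      by (intro mult_right_mono divide_left_mono fact_mono) (auto simp: x0 B0)
    also have "\<dots> = x^3 * B * (x^i / fact i)" by (simp add: power_add)
    finally show ?thesis .
  qed
  have "norm S \<le> (\<Sum>i. x^3 * B * (x^i / fact i))"
    unfolding S_def
    by (rule norm_suminf_le[OF tb]) (intro summable_mult sums_summable[OF exp_sums_real])
  also have "\<dots> = x^3 * B * exp x"
    using sums_mult[OF exp_sums_real[of x], of "x^3 * B"] sums_unique by metis
  finally have Sb: "norm S \<le> x^3 * B * exp x" .
  have "cmod (- S / complex_of_real e) = norm S / \<bar>e\<bar>" by (simp add: norm_divide)
  also have "\<dots> \<le> x^3 * B * exp x / \<bar>e\<bar>" using Sb e0 by (simp add: divide_right_mono)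
  also have "\<dots> = \<bar>e\<bar>^2 * (8*(real n+1)^3*exp x*B)"
  proof -
    have gen: "(a::real) \<noteq> 0 \<Longrightarrow> (2*a*y)^3 * B * z / a = a^2*(8*y^3*z*B)" for a y z
      by (simp add: field_simps power3_eq_cube power2_eq_square)
    show ?thesis unfolding x_def using gen[of "\<bar>e\<bar>" "real n + 1" "exp (2*\<bar>e\<bar>*(real n+1))"] e0 by simp
  qed
  also have "\<dots> = e^2 * (8*(real n+1)^3*exp x*B)" by simp
  also have "\<dots> \<le> e^2 * (8*(real n+1)^3*exp(2*(real n+1))*B)"
  proof -
    have "x \<le> 2*(real n+1)" 
    proof -
      have "\<bar>e\<bar> * (real n + 1) \<le> 1 * (real n + 1)" using e1 by (intro mult_right_mono) auto
      then show ?thesis unfolding x_def mult.assoc by linarith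
    qed
    then show ?thesis by (intro mult_left_mono mult_right_mono) (auto simp: B0)
  qed
  finally show ?thesis using bs dEq B_def by simp
qed

lemma pow_le_exp: assumes "0 \<le> (x::real)" shows "x^p \<le> fact p * exp x"
proof -
  have "sum (\<lambda>i. x^i / fact i) {p} \<le> (\<Sum>i. x^i / fact i)"
    by (rule sum_le_suminf) (use assms sums_summable[OF exp_sums_real] in auto)
  then have "x^p / fact p \<le> exp x" using sums_unique[OF exp_sums_real[of x]] by simp
  then show ?thesis by (simp add: field_simps)
qed

lemma summable_expo: "summable (\<lambda>n. K * (y::real)^n / fact n)"
  using summable_mult[OF sums_summable[OF exp_sums_real[of y]], of K] by (simp add: mult_ac)

lemma coh_bound: "cmod (coherent a n) \<le> cmod a ^ n / sqrt (fact n)"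
proof -
  have "cmod (coherent a n) = exp (- ((cmod a)\<^sup>2 / 2)) * cmod a ^ n / sqrt (fact n)"
    unfolding coherent_def by (simp add: norm_mult norm_divide norm_power norm_exp_eq_Re)
  also have "\<dots> \<le> 1 * cmod a ^ n / sqrt (fact n)"
    by (intro divide_right_mono mult_right_mono) auto
  finally show ?thesis by simp
qed

lemma psi_bound:
  fixes c a :: "nat \<Rightarrow> complex" and k :: nat
  shows "cmod (\<Sum>j<k. c j * coherent (a j) n) \<le> (\<Sum>j<k. cmod (c j)) * (1 + (\<Sum>j<k. cmod (a j)))^n / sqrt (fact n)"
proof -
  define R where "R = 1 + (\<Sum>j<k. cmod (a j))"
  have "cmod (\<Sum>j<k. c j * coherent (a j) n) \<le> (\<Sum>j<k. cmod (c j * coherent (a j) n))"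
    by (rule norm_sum)
  also have "\<dots> \<le> (\<Sum>j<k. cmod (c j) * (R^n / sqrt (fact n)))"
  proof (rule sum_mono)
    fix j assume j: "j \<in> {..<k}"
    have aj: "cmod (a j) \<le> R"
      unfolding R_def using member_le_sum[of j "{..<k}" "\<lambda>j. cmod (a j)"] j by auto
    have "cmod (coherent (a j) n) \<le> cmod (a j) ^ n / sqrt (fact n)" by (rule coh_bound)
    also have "\<dots> \<le> R^n / sqrt (fact n)"
      by (intro divide_right_mono power_mono aj) auto
    finally have cb: "cmod (coherent (a j) n) \<le> R^n / sqrt (fact n)" .
    show "cmod (c j * coherent (a j) n) \<le> cmod (c j) * (R^n / sqrt (fact n))"
      using mult_left_mono[OF cb, of "cmod (c j)"] by (simp add: norm_mult)
  qed
  also have "\<dots> = (\<Sum>j<k. cmod (c j)) * R^n / sqrt (fact n)"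
    by (simp add: sum_distrib_right sum_divide_distrib)
  finally show ?thesis unfolding R_def .
qed

lemma psi_sq_bound:
  fixes c a :: "nat \<Rightarrow> complex" and k :: nat
  defines "A \<equiv> (\<Sum>j<k. cmod (c j))" and "R \<equiv> 1 + (\<Sum>j<k. cmod (a j))"
  shows "(cmod (\<Sum>j<k. c j * coherent (a j) n))^2 \<le> A^2 * (R^2)^n / fact n"
proof -
  have "(cmod (\<Sum>j<k. c j * coherent (a j) n))^2 \<le> (A * R^n / sqrt (fact n))^2"
    using psi_bound[where c=c and a=a and k=k and n=n] unfolding A_def R_def by (intro power_mono) auto
  also have "\<dots> = A^2 * (R^2)^n / fact n"
    by (simp add: power_mult_distrib power_divide power_mult[symmetric] mult.commute)
  finally show ?thesis .
qed

lemma g_summable: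
  fixes c a :: "nat \<Rightarrow> complex" and k :: nat
  defines "\<psi> \<equiv> (\<lambda>n. \<Sum>j<k. c j * coherent (a j) n)"
  shows "summable (\<lambda>n. (8*(real n+1)^3*exp(2*(real n+1))*cmod(\<psi>(n-1)))^2)"
proof -
  define A where "A = (\<Sum>j<k. cmod (c j))"
  define R where "R = 1 + (\<Sum>j<k. cmod (a j))"
  have "summable (\<lambda>n. 46080 * exp 10 * A^2 * (exp 5 * R^2)^n / fact n)" by (rule summable_expo)
  moreover have "norm ((8*(real (Suc n)+1)^3*exp(2*(real (Suc n)+1))*cmod(\<psi>(Suc n-1)))^2)
      \<le> 46080 * exp 10 * A^2 * (exp 5 * R^2)^n / fact n" for n
  proof -
    define z where "z = real n + 2"
    define u where "u = cmod (\<psi> n)"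
    have z0: "0 \<le> z" by (simp add: z_def)
    have zz: "real (Suc n) + 1 = z" by (simp add: z_def)
    have e4: "exp(2*z)^2 = exp(4*z)" by (simp add: power2_eq_square exp_add[symmetric])
    have "norm ((8*(real (Suc n)+1)^3*exp(2*(real (Suc n)+1))*cmod(\<psi>(Suc n-1)))^2)
        = (8*z^3*exp(2*z)*u)^2" unfolding zz u_def by simp
    also have "\<dots> = 64 * (z^3)^2 * exp(2*z)^2 * u^2" by (simp add: power_mult_distrib)
    also have "\<dots> = 64 * z^6 * exp(4*z) * u^2" by (simp add: e4 power_mult[symmetric])
    also have "\<dots> \<le> 64 * (720 * exp z) * exp (4*z) * (A^2 * (R^2)^n / fact n)"
    proof (intro mult_mono mult_left_mono)
      show "z^6 \<le> 720 * exp z" using pow_le_exp[OF z0, of 6] by (simp add: fact_numeral)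
      show "u^2 \<le> A^2 * (R^2)^n / fact n"
        unfolding u_def \<psi>_def A_def R_def by (rule psi_sq_bound)
    qed (auto simp: A_def)
    also have "\<dots> = 46080 * (exp z * exp (4*z)) * A^2 * (R^2)^n / fact n"
      by simp
    also have "exp z * exp (4*z) = exp 10 * exp 5 ^ n"
    proof -
      have "exp z * exp (4*z) = exp (10 + real n * 5)" by (simp add: exp_add[symmetric] z_def) 
      also have "\<dots> = exp 10 * exp 5 ^ n" by (simp add: exp_add exp_of_nat_mult[symmetric])
      finally show ?thesis .
    qed
    also have "46080 * (exp 10 * exp 5 ^ n) * A^2 * (R^2)^n / fact n = 46080 * exp 10 * A^2 * (exp 5 * R^2)^n / fact n"
      by (simp add: power_mult_distrib ac_simps)
    finally show ?thesis .
  qed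
  ultimately have "summable (\<lambda>n. (8*(real (Suc n)+1)^3*exp(2*(real (Suc n)+1))*cmod(\<psi>(Suc n-1)))^2)"
    by (rule summable_comparison_test')
  then show ?thesis using summable_Suc_iff[of "\<lambda>n. (8*(real n+1)^3*exp(2*(real n+1))*cmod(\<psi>(n-1)))^2"] by blast
qed

definition qpoly :: "complex \<Rightarrow> complex \<Rightarrow> nat \<Rightarrow> complex" where
  "qpoly a t n = (\<Sum>i<n. (a+t)^i * a^(n - Suc i))"

definition chi :: "(nat \<Rightarrow> complex) \<Rightarrow> (nat \<Rightarrow> complex) \<Rightarrow> nat \<Rightarrow> complex \<Rightarrow> nat \<Rightarrow> complex" where
  "chi c a k t n = (\<Sum>j<k. c j * exp (- complex_of_real ((cmod (a j))\<^sup>2 / 2)) * qpoly (a j) t n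
                      / complex_of_real (sqrt (fact n)))"

lemma qpoly0: "qpoly a 0 n = of_nat n * a^(n - 1)"
proof -
  have "qpoly a 0 n = (\<Sum>i<n. a^(n - 1))"
    unfolding qpoly_def by (intro sum.cong refl) (simp add: power_add[symmetric])
  then show ?thesis by simp
qed

lemma sqrt_fact_Suc: "sqrt (real (Suc m)) / sqrt (fact m) = real (Suc m) / sqrt (fact (Suc m))"
proof -
  have p: "0 < sqrt (real (Suc m))" "0 < sqrt (fact m :: real)" by auto
  have "sqrt (fact (Suc m) :: real) = sqrt (real (Suc m)) * sqrt (fact m)"
    by (simp add: real_sqrt_mult)
  moreover have "real (Suc m) = sqrt (real (Suc m)) * sqrt (real (Suc m))"
    by (simp del: of_nat_Suc)
  ultimately show ?thesis using p by (simp add: field_simps del: of_nat_Suc)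
qed

lemma chi0: "chi c a k 0 = adag (\<lambda>n. \<Sum>j<k. c j * coherent (a j) n)"
proof
  fix n show "chi c a k 0 n = adag (\<lambda>n. \<Sum>j<k. c j * coherent (a j) n) n"
  proof (cases n)
    case 0 then show ?thesis by (simp add: chi_def adag_def qpoly_def)
  next
    case (Suc m)
    have r: "complex_of_real (sqrt (real (Suc m))) / complex_of_real (sqrt (fact m))
           = of_nat (Suc m) / complex_of_real (sqrt (fact (Suc m)))"
      using arg_cong[OF sqrt_fact_Suc[of m], of complex_of_real] by (simp del: of_nat_Suc)
    have "adag (\<lambda>n. \<Sum>j<k. c j * coherent (a j) n) n
        = (\<Sum>j<k. c j * exp (- complex_of_real ((cmod (a j))\<^sup>2 / 2)) * a j ^ m
              * (complex_of_real (sqrt (real (Suc m))) / complex_of_real (sqrt (fact m))))"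
      by (simp add: Suc adag_def coherent_def sum_distrib_left mult_ac del: of_nat_Suc)
    also have "\<dots> = chi c a k 0 n"
      unfolding r by (simp add: Suc chi_def qpoly0 mult_ac del: of_nat_Suc)
    finally show ?thesis ..
  qed
qed

lemma sum_double: "(\<Sum>j<k+(m::nat). f j) = (\<Sum>j<k. f j) + (\<Sum>j<m. f (j+k))"
  by (induct m) (simp_all add: add.commute add.left_commute)

lemma qpoly_diff: "t * qpoly a t n = (a+t)^n - a^n"
  using power_diff_sumr2[of "a+t" n a] unfolding qpoly_def by (simp add: mult_ac)

lemma chi_rank:
  assumes t: "t \<noteq> 0"
  shows "has_coherent_rank (2*k) (chi c a k t)"
proof -
  define E where "E = (\<lambda>z. exp (- complex_of_real ((cmod z)\<^sup>2 / 2)))"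
  define c' where "c' = (\<lambda>j. if j < k then c j * E (a j) / (t * E (a j + t)) else - c (j - k) / t)"
  define a' where "a' = (\<lambda>j. if j < k then a j + t else a (j - k))"
  have Ene: "E z \<noteq> 0" for z by (simp add: E_def)
  have coh: "coherent z n = E z * z^n / complex_of_real (sqrt (fact n))" for z n
    by (simp add: coherent_def E_def)
  have "chi c a k t n = (\<Sum>j<2*k. c' j * coherent (a' j) n)" for n
  proof -
    have "(\<Sum>j<2*k. c' j * coherent (a' j) n) = (\<Sum>j<k. c' j * coherent (a' j) n) + (\<Sum>j<k. c' (j+k) * coherent (a' (j+k)) n)"
      using sum_double[of "\<lambda>j. c' j * coherent (a' j) n" k k] by (simp add: mult_2)
    also have "\<dots> = (\<Sum>j<k. c' j * coherent (a' j) n + c' (j+k) * coherent (a' (j+k)) n)"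
      by (simp add: sum.distrib)
    also have "\<dots> = chi c a k t n"
      unfolding chi_def
    proof (intro sum.cong refl)
      fix j assume "j \<in> {..<k}"
      then have j: "j < k" by simp
      have s: "complex_of_real (sqrt (fact n)) \<noteq> 0" by simp
      have q: "qpoly (a j) t n = ((a j + t)^n - a j ^ n) / t"
        using qpoly_diff[of t "a j" n] t by (simp add: field_simps)
      show "c' j * coherent (a' j) n + c' (j+k) * coherent (a' (j+k)) n
          = c j * exp (- complex_of_real ((cmod (a j))\<^sup>2 / 2)) * qpoly (a j) t n / complex_of_real (sqrt (fact n))"
        unfolding q using j t s Ene[of "a j + t"]
        by (simp add: c'_def a'_def coh E_def[symmetric] field_simps) (simp add: E_def algebra_simps)
    qed
    finally show ?thesis ..
  qed
  then show ?thesis unfolding has_coherent_rank_def by blast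
qed

lemma qpoly_bound:
  assumes "cmod a \<le> R" "cmod (a+t) \<le> R" "1 \<le> R"
  shows "cmod (qpoly a t n) \<le> real n * R^n"
proof -
  have "cmod (qpoly a t n) \<le> (\<Sum>i<n. cmod ((a+t)^i * a^(n - Suc i)))"
    unfolding qpoly_def by (rule norm_sum)
  also have "\<dots> \<le> (\<Sum>i<n. R^n)"
  proof (rule sum_mono)
    fix i assume i: "i \<in> {..<n}"
    have "cmod ((a+t)^i * a^(n - Suc i)) \<le> R^i * R^(n - Suc i)"
      unfolding norm_mult norm_power using assms by (intro mult_mono power_mono) auto
    also have "\<dots> = R^(i + (n - Suc i))" by (simp add: power_add)
    also have "\<dots> \<le> R^n" using i assms(3) by (intro power_increasing) auto
    finally show "cmod ((a+t)^i * a^(n - Suc i)) \<le> R^n" .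
  qed
  finally show ?thesis by simp
qed

lemma chi_bound:
  assumes t: "cmod t \<le> 1"
  shows "cmod (chi c a k t n) \<le> (\<Sum>j<k. cmod (c j)) * (real n * (1 + (\<Sum>j<k. cmod (a j)))^n) / sqrt (fact n)"
proof -
  define R where "R = 1 + (\<Sum>j<k. cmod (a j))"
  have R1: "1 \<le> R" unfolding R_def by (simp add: sum_nonneg)
  have "cmod (chi c a k t n) \<le> (\<Sum>j<k. cmod (c j * exp (- complex_of_real ((cmod (a j))\<^sup>2 / 2)) * qpoly (a j) t n
                      / complex_of_real (sqrt (fact n))))"
    unfolding chi_def by (rule norm_sum)
  also have "\<dots> \<le> (\<Sum>j<k. cmod (c j) * (real n * R^n / sqrt (fact n)))"
  proof (rule sum_mono)
    fix j assume j: "j \<in> {..<k}"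
    have aj: "cmod (a j) \<le> (\<Sum>j<k. cmod (a j))"
      using member_le_sum[of j "{..<k}" "\<lambda>j. cmod (a j)"] j by auto
    have q: "cmod (qpoly (a j) t n) \<le> real n * R^n"
    proof (rule qpoly_bound[OF _ _ R1])
      show "cmod (a j) \<le> R" using aj by (simp add: R_def)
      have "cmod (a j + t) \<le> cmod (a j) + cmod t" by (rule norm_triangle_ineq)
      then show "cmod (a j + t) \<le> R" using aj t by (simp add: R_def)
    qed
    have ex: "cmod (exp (- complex_of_real ((cmod (a j))\<^sup>2 / 2))) \<le> 1"
      by (simp add: norm_exp_eq_Re)
    have "cmod (exp (- complex_of_real ((cmod (a j))\<^sup>2 / 2)) * qpoly (a j) t n) \<le> 1 * (real n * R^n)"
      unfolding norm_mult by (intro mult_mono ex q) auto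
    then have "cmod (exp (- complex_of_real ((cmod (a j))\<^sup>2 / 2)) * qpoly (a j) t n) / sqrt (fact n)
          \<le> real n * R^n / sqrt (fact n)"
      by (intro divide_right_mono) auto
    then have "cmod (c j) * (cmod (exp (- complex_of_real ((cmod (a j))\<^sup>2 / 2)) * qpoly (a j) t n) / sqrt (fact n))
          \<le> cmod (c j) * (real n * R^n / sqrt (fact n))"
      by (intro mult_left_mono) auto
    then show "cmod (c j * exp (- complex_of_real ((cmod (a j))\<^sup>2 / 2)) * qpoly (a j) t n
                      / complex_of_real (sqrt (fact n))) \<le> cmod (c j) * (real n * R^n / sqrt (fact n))"
      by (simp add: norm_mult norm_divide mult.assoc)
  qed
  also have "\<dots> = (\<Sum>j<k. cmod (c j)) * (real n * R^n) / sqrt (fact n)"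
    by (simp add: sum_distrib_right sum_divide_distrib)
  finally show ?thesis unfolding R_def .
qed

lemma chi_M:
  assumes "cmod t \<le> 1" "cmod s \<le> 1"
  shows "cmod (chi c a k t n) * cmod (chi c a k s n)
    \<le> (\<Sum>j<k. cmod (c j))^2 * (real n)^2 * ((1 + (\<Sum>j<k. cmod (a j)))^2)^n / fact n"
proof -
  define A where "A = (\<Sum>j<k. cmod (c j))"
  define R where "R = 1 + (\<Sum>j<k. cmod (a j))"
  have "cmod (chi c a k t n) * cmod (chi c a k s n) \<le> (A * (real n * R^n) / sqrt (fact n)) * (A * (real n * R^n) / sqrt (fact n))"
    using chi_bound[OF assms(1), of c a k n] chi_bound[OF assms(2), of c a k n] unfolding A_def R_def
    by (intro mult_mono) (auto simp: sum_nonneg)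
  also have "\<dots> = A^2 * (real n)^2 * (R^2)^n / fact n"
  proof -
    have s: "sqrt (fact n) * sqrt (fact n) = (fact n::real)" by simp
    have r: "(R^2)^n = R^n * R^n" by (simp add: power2_eq_square power_mult_distrib)
    have "(A * (real n * R^n) / sqrt (fact n)) * (A * (real n * R^n) / sqrt (fact n))
        = (A * (real n * R^n)) * (A * (real n * R^n)) / (sqrt (fact n) * sqrt (fact n))"
      by (rule times_divide_times_eq)
    also have "\<dots> = A^2 * (real n)^2 * (R^2)^n / fact n"
      unfolding s r by (simp add: power2_eq_square mult_ac)
    finally show ?thesis .
  qed
  finally show ?thesis unfolding A_def R_def .
qed

lemma M_summable: "summable (\<lambda>n. (A::real)^2 * (real n)^2 * (R^2)^n / fact n)"
proof (rule summable_comparison_test'[OF summable_expo[of "2 * A^2" "exp 1 * R^2"]])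
  fix n :: nat
  have "(real n)^2 \<le> fact 2 * exp (real n)" by (rule pow_le_exp) simp
  also have "exp (real n) = exp 1 ^ n" by (simp add: exp_of_nat_mult[symmetric])
  finally have nn: "(real n)^2 \<le> 2 * exp 1 ^ n" by simp
  have "A^2 * (real n)^2 * (R^2)^n / fact n \<le> A^2 * (2 * exp 1 ^ n) * (R^2)^n / fact n"
    by (intro divide_right_mono mult_right_mono mult_left_mono nn) auto
  also have "\<dots> = 2 * A^2 * (exp 1 * R^2)^n / fact n" by (simp add: power_mult_distrib mult_ac)
  finally show "norm (A^2 * (real n)^2 * (R^2)^n / fact n) \<le> 2 * A^2 * (exp 1 * R^2)^n / fact n"
    by simp
qed

lemma fid_tends:
  fixes c a :: "nat \<Rightarrow> complex" and k :: nat
  assumes pos: "0 < normsq_l2 (chi c a k 0)"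
  shows "((\<lambda>t. fidelity (chi c a k 0) (chi c a k t)) \<longlongrightarrow> 1) (at 0)"
proof -
  define \<phi> where "\<phi> = chi c a k 0"
  define A where "A = (\<Sum>j<k. cmod (c j))"
  define R where "R = 1 + (\<Sum>j<k. cmod (a j))"
  define M where "M = (\<lambda>n. A^2 * (real n)^2 * (R^2)^n / fact n)"
  have sM: "summable M" unfolding M_def by (rule M_summable)
  have "((\<lambda>t. cmod t) \<longlongrightarrow> 0) (at (0::complex))"
    using tendsto_norm_zero[OF tendsto_ident_at[of "0::complex" UNIV]] by simp
  then have "eventually (\<lambda>t. cmod t < 1) (at (0::complex))"
    by (rule order_tendstoD(2)) simp
  then have ev1: "eventually (\<lambda>t. cmod t \<le> 1) (at (0::complex))"
    by (rule eventually_mono) simp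
  have Mb: "cmod (chi c a k t n) * cmod (chi c a k s n) \<le> M n" if "cmod t \<le> 1" "cmod s \<le> 1" for t s n
    using chi_M[OF that, of c a k n] unfolding M_def A_def R_def .
  have ct: "((\<lambda>t. chi c a k t n) \<longlongrightarrow> \<phi> n) (at 0)" for n
  proof -
    have "isCont (\<lambda>t. chi c a k t n) 0"
      unfolding chi_def qpoly_def by (intro continuous_intros) simp
    then show ?thesis unfolding \<phi>_def by (rule isContD)
  qed
  have T1: "((\<lambda>t. \<Sum>n. cnj (\<phi> n) * chi c a k t n) \<longlongrightarrow> (\<Sum>n. cnj (\<phi> n) * \<phi> n)) (at 0)"
  proof (rule tannerys_theorem[THEN conjunct2, THEN conjunct2])
    show "((\<lambda>t. cnj (\<phi> n) * chi c a k t n) \<longlongrightarrow> cnj (\<phi> n) * \<phi> n) (at 0)" for n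
      by (intro tendsto_mult tendsto_const ct)
    show "eventually (\<lambda>(n, t). norm (cnj (\<phi> n) * chi c a k t n) \<le> M n) (at_top \<times>\<^sub>F at 0)"
      unfolding eventually_prod_filter
      apply (rule exI[of _ "\<lambda>_. True"], rule exI[of _ "\<lambda>t. cmod t \<le> 1"])
      using ev1 Mb[of 0] by (auto simp: norm_mult \<phi>_def mult.commute)
  qed (auto simp: sM)
  have T2: "summable (\<lambda>n. norm ((cmod (\<phi> n))^2)) \<and>
      ((\<lambda>t. \<Sum>n. (cmod (chi c a k t n))^2) \<longlongrightarrow> (\<Sum>n. (cmod (\<phi> n))^2)) (at 0)"
  proof (rule tannerys_theorem[THEN conjunct2])
    show "((\<lambda>t. (cmod (chi c a k t n))^2) \<longlongrightarrow> (cmod (\<phi> n))^2) (at 0)" for n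
      by (intro tendsto_power tendsto_norm ct)
    show "eventually (\<lambda>(n, t). norm ((cmod (chi c a k t n))^2) \<le> M n) (at_top \<times>\<^sub>F at 0)"
      unfolding eventually_prod_filter
      apply (rule exI[of _ "\<lambda>_. True"], rule exI[of _ "\<lambda>t. cmod t \<le> 1"])
      using ev1 Mb by (auto simp: power2_eq_square)
  qed (auto simp: sM)
  have sphi: "summable (\<lambda>n. (cmod (\<phi> n))^2)" using T2 by simp
  define N where "N = normsq_l2 \<phi>"
  have N0: "0 < N" using pos by (simp add: N_def \<phi>_def)
  have inn: "(\<Sum>n. cnj (\<phi> n) * \<phi> n) = complex_of_real N"
  proof -
    have "(\<Sum>n. cnj (\<phi> n) * \<phi> n) = (\<Sum>n. complex_of_real ((cmod (\<phi> n))^2))"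
      by (intro suminf_cong) (simp add: complex_norm_square[of "\<phi> _"] mult.commute del: of_real_power)
    also have "\<dots> = complex_of_real N"
      unfolding N_def normsq_l2_def by (rule suminf_of_real[OF sphi, symmetric])
    finally show ?thesis .
  qed
  have L1: "((\<lambda>t. inner_l2 \<phi> (chi c a k t)) \<longlongrightarrow> complex_of_real N) (at 0)"
    using T1 unfolding inner_l2_def inn .
  have L2: "((\<lambda>t. normsq_l2 (chi c a k t)) \<longlongrightarrow> N) (at 0)"
    using T2 unfolding normsq_l2_def N_def by simp
  have "((\<lambda>t. (cmod (inner_l2 \<phi> (chi c a k t)))^2 / (normsq_l2 \<phi> * normsq_l2 (chi c a k t)))
        \<longlongrightarrow> (cmod (complex_of_real N))^2 / (N * N)) (at 0)"
    using N0 unfolding N_def[symmetric]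
    by (intro tendsto_divide tendsto_power tendsto_norm tendsto_mult tendsto_const L1 L2) auto
  moreover have "(cmod (complex_of_real N))^2 / (N * N) = 1"
    using N0 by (simp add: power2_eq_square)
  ultimately show ?thesis unfolding fidelity_def \<phi>_def by simp
qed

theorem proposition5:
  fixes \<psi> :: "nat \<Rightarrow> complex" and k :: nat
  assumes rank: "has_coherent_rank k \<psi>"
    and state: "\<psi> \<noteq> (\<lambda>_. 0)"
  shows "(\<exists>C \<delta>. \<delta> > 0 \<and>
           (\<forall>\<epsilon>::real. \<epsilon> \<noteq> 0 \<and> \<bar>\<epsilon>\<bar> < \<delta> \<longrightarrow>
              (let d = (\<lambda>n. adag \<psi> n
                   - proj_aux_vac (beamsplitter (2 * \<epsilon>) 0 (tensor \<psi> (fock 1))) n / complex_of_real \<epsilon>)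
               in summable (\<lambda>n. (cmod (d n))\<^sup>2) \<and> sqrt (normsq_l2 d) \<le> C * \<epsilon>\<^sup>2)))
         \<and> approx_coherent_rank (adag \<psi>) \<le> 2 * k"
proof -
  obtain c a :: "nat \<Rightarrow> complex" where psi: "\<psi> = (\<lambda>n. \<Sum>j<k. c j * coherent (a j) n)"
    using rank unfolding has_coherent_rank_def by blast
  define g where "g = (\<lambda>n. 8*(real n+1)^3*exp(2*(real n+1))*cmod(\<psi>(n-1)))"
  have sg: "summable (\<lambda>n. (g n)^2)" unfolding g_def psi by (rule g_summable)
  define G where "G = (\<Sum>n. (g n)^2)"
  have part1: "\<forall>\<epsilon>::real. \<epsilon> \<noteq> 0 \<and> \<bar>\<epsilon>\<bar> < 1 \<longrightarrow>
              (let d = (\<lambda>n. adag \<psi> n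
                   - proj_aux_vac (beamsplitter (2 * \<epsilon>) 0 (tensor \<psi> (fock 1))) n / complex_of_real \<epsilon>)
               in summable (\<lambda>n. (cmod (d n))\<^sup>2) \<and> sqrt (normsq_l2 d) \<le> sqrt G * \<epsilon>\<^sup>2)"
  proof (intro allI impI)
    fix e :: real assume e: "e \<noteq> 0 \<and> \<bar>e\<bar> < 1"
    define d where "d = (\<lambda>n. adag \<psi> n
                   - proj_aux_vac (beamsplitter (2 * e) 0 (tensor \<psi> (fock 1))) n / complex_of_real e)"
    have db: "cmod (d n) \<le> e^2 * g n" for n
      unfolding d_def g_def using d_bound[of e \<psi> n] e by simp
    have sq: "(cmod (d n))^2 \<le> e^4 * (g n)^2" for n
    proof -
      have "(cmod (d n))^2 \<le> (e^2 * g n)^2" by (intro power_mono db) simp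
      also have "\<dots> = e^4 * (g n)^2" by (simp add: power_mult_distrib power_mult[symmetric])
      finally show ?thesis .
    qed
    have s4: "summable (\<lambda>n. e^4 * (g n)^2)" by (rule summable_mult[OF sg])
    have sd: "summable (\<lambda>n. (cmod (d n))^2)"
      by (rule summable_comparison_test'[OF s4]) (use sq in simp)
    have "normsq_l2 d \<le> (\<Sum>n. e^4 * (g n)^2)"
      unfolding normsq_l2_def by (rule suminf_le[OF sq sd s4])
    also have "\<dots> = e^4 * G" unfolding G_def by (rule suminf_mult[OF sg])
    finally have "sqrt (normsq_l2 d) \<le> sqrt (e^4 * G)" by simp
    also have "\<dots> = sqrt G * e^2"
    proof -
      have "sqrt (e^4) = e^2"
        using real_sqrt_abs[of "e^2"] by (simp add: power_mult[symmetric])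
      then show ?thesis by (simp add: real_sqrt_mult)
    qed
    finally show "let d = (\<lambda>n. adag \<psi> n
                   - proj_aux_vac (beamsplitter (2 * e) 0 (tensor \<psi> (fock 1))) n / complex_of_real e)
               in summable (\<lambda>n. (cmod (d n))\<^sup>2) \<and> sqrt (normsq_l2 d) \<le> sqrt G * e\<^sup>2"
      using sd unfolding d_def Let_def by simp
  qed
  have phi: "chi c a k 0 = adag \<psi>" unfolding psi by (rule chi0)
  have pos: "0 < normsq_l2 (chi c a k 0)"
  proof -
    obtain m where m: "\<psi> m \<noteq> 0" using state by auto
    have sM: "summable (\<lambda>n. (cmod (chi c a k 0 n))^2)"
    proof (rule summable_comparison_test'[OF M_summable[of "\<Sum>j<k. cmod (c j)" "1 + (\<Sum>j<k. cmod (a j))"]])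
      fix n
      show "norm ((cmod (chi c a k 0 n))^2) \<le> (\<Sum>j<k. cmod (c j))^2 * (real n)^2 * ((1 + (\<Sum>j<k. cmod (a j)))^2)^n / fact n"
        using chi_M[of 0 0 c a k n] by (simp add: power2_eq_square)
    qed
    have "0 < (cmod (chi c a k 0 (Suc m)))^2"
      using m unfolding phi by (simp add: adag_def)
    then show ?thesis unfolding normsq_l2_def by (rule suminf_pos2[OF sM, rotated]) simp
  qed
  have P: "\<forall>\<delta>>0. \<exists>X. has_coherent_rank (2*k) X \<and> fidelity (adag \<psi>) X > 1 - \<delta>"
  proof (intro allI impI)
    fix \<delta> :: real assume \<delta>: "\<delta> > 0"
    have "eventually (\<lambda>t. 1 - \<delta> < fidelity (chi c a k 0) (chi c a k t)) (at 0)"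
      by (rule order_tendstoD(1)[OF fid_tends[OF pos]]) (use \<delta> in simp)
    moreover have "eventually (\<lambda>t. t \<noteq> (0::complex)) (at 0)"
      by (simp add: eventually_at_filter)
    ultimately have "eventually (\<lambda>t. t \<noteq> 0 \<and> 1 - \<delta> < fidelity (chi c a k 0) (chi c a k t)) (at 0)"
      by (simp add: eventually_conj_iff)
    then obtain t where t: "t \<noteq> 0" "1 - \<delta> < fidelity (chi c a k 0) (chi c a k t)"
      using eventually_happens'[OF at_neq_bot] by blast
    show "\<exists>X. has_coherent_rank (2*k) X \<and> fidelity (adag \<psi>) X > 1 - \<delta>"
      using chi_rank[OF t(1), of k c a] t(2) unfolding phi by blast
  qed
  have part2: "approx_coherent_rank (adag \<psi>) \<le> 2 * k"
    unfolding approx_coherent_rank_def by (rule Least_le) (use P in blast)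
  show ?thesis
    using part1 part2 by (intro conjI exI[of _ "sqrt G"] exI[of _ "1::real"]) auto
qed

end
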